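(* Let $\Pi$ be a Lévy measure on $\mathbb{R}^d$ and assume $\overline{V}(t):=\int_{|y|\le t}|y|^2\,\Pi(dy)>0$ for all $t>0$. Let $g:[0,\infty)\to(0,\infty)$ be non-decreasing with $\int_0^c g(t)^{-1}dt<\infty$ for all $c>0$. Then $$\int_{|y|\le1}\frac{|y|^2}{g(\overline{V}(|y|))}\,\Pi(dy)<\infty.$$
   Context: A Lévy measure $\Pi$ satisfies $\Pi(\{0\})=0$ and $\int(1\wedge|y|^2)\Pi(dy)<\infty$; $|\cdot|$ is the Euclidean norm. *)

theory Defs
  imports "HOL-Analysis.Analysis"
begin

definition levy_measure :: "'a::euclidean_space measure \<Rightarrow> bool" where
  "levy_measure Lm \<longleftrightarrow> sets Lm = sets borel \<and> emeasure Lm {0} = 0 \<and>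
     (\<integral>\<^sup>+ y. ennreal (min 1 ((norm y)\<^sup>2)) \<partial>Lm) < \<infinity>"

definition Vbar :: "'a::euclidean_space measure \<Rightarrow> real \<Rightarrow> real" where
  "Vbar Lm t = enn2real (\<integral>\<^sup>+ y. indicator {y. norm y \<le> t} y * ennreal ((norm y)\<^sup>2) \<partial>Lm)"

end

theory Submission
  imports Defs
begin

lemma lm_meas:
  assumes "sets Lm = sets (borel :: 'a::euclidean_space measure)"
  shows "(\<lambda>y::'a. indicator {y. norm y \<le> t} y * ennreal ((norm y)\<^sup>2)) \<in> borel_measurable Lm"
proof -
  have "(\<lambda>y::'a. indicator {y. norm y \<le> t} y * ennreal ((norm y)\<^sup>2)) \<in> borel_measurable borel"
    by measurable
  then show ?thesis using measurable_cong_sets[OF assms refl, of borel] by metis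
qed

lemma I_fin:
  assumes "levy_measure Lm" "t \<le> 1"
  shows "(\<integral>\<^sup>+ y. indicator {y. norm y \<le> t} y * ennreal ((norm y)\<^sup>2) \<partial>Lm) = ennreal (Vbar Lm t)"
proof -
  have "(\<integral>\<^sup>+ y. indicator {y. norm y \<le> t} y * ennreal ((norm y)\<^sup>2) \<partial>Lm)
      \<le> (\<integral>\<^sup>+ y. ennreal (min 1 ((norm y)\<^sup>2)) \<partial>Lm)"
  proof (rule nn_integral_mono)
    fix y :: 'a
    show "indicator {y. norm y \<le> t} y * ennreal ((norm y)\<^sup>2) \<le> ennreal (min 1 ((norm y)\<^sup>2))"
    proof (cases "norm y \<le> t")
      case True
      then have "norm y \<le> 1" using assms(2) by simp
      then have "(norm y)\<^sup>2 \<le> 1" by (simp add: power_le_one)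
      then show ?thesis using True by (simp add: min_def)
    qed simp
  qed
  also have "\<dots> < \<infinity>" using assms(1) unfolding levy_measure_def by simp
  finally show ?thesis unfolding Vbar_def by simp
qed

lemma V_nonneg: "Vbar Lm t \<ge> 0"
  unfolding Vbar_def by simp

lemma V_le0:
  assumes "t \<le> 0"
  shows "Vbar Lm t = 0"
proof -
  have "(\<lambda>y::'a. indicator {y. norm y \<le> t} y * ennreal ((norm y)\<^sup>2)) = (\<lambda>y. 0)"
  proof
    fix y :: 'a
    show "indicator {y. norm y \<le> t} y * ennreal ((norm y)\<^sup>2) = 0"
      using assms by (cases "norm y \<le> t") (auto simp: indicator_def dest: order.trans[of "norm y"])
  qed
  then show ?thesis unfolding Vbar_def by simp
qed

lemma V_mono:
  assumes "levy_measure Lm" "s \<le> t" "t \<le> 1"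
  shows "Vbar Lm s \<le> Vbar Lm t"
proof -
  have "(\<integral>\<^sup>+ y. indicator {y. norm y \<le> s} y * ennreal ((norm y)\<^sup>2) \<partial>Lm)
      \<le> (\<integral>\<^sup>+ y. indicator {y. norm y \<le> t} y * ennreal ((norm y)\<^sup>2) \<partial>Lm)"
    using assms(2) by (intro nn_integral_mono) (auto simp: indicator_def)
  then show ?thesis using I_fin[OF assms(1) assms(3)] I_fin[OF assms(1), of s] assms
    by (simp add: ennreal_le_iff V_nonneg)
qed


lemma key:
  assumes lm: "levy_measure Lm" and c0: "c \<ge> 0"
  shows "(\<integral>\<^sup>+ y. indicator {y. norm y \<le> 1 \<and> Vbar Lm (norm y) \<le> c} y * ennreal ((norm y)\<^sup>2) \<partial>Lm) \<le> ennreal c"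
proof -
  let ?B = "{y. norm y \<le> 1 \<and> Vbar Lm (norm y) \<le> c}"
  let ?I = "\<lambda>t. \<integral>\<^sup>+ y. indicator {y. norm y \<le> t} y * ennreal ((norm y)\<^sup>2) \<partial>Lm"
  have sets: "sets Lm = sets borel" using lm unfolding levy_measure_def by simp
  define S where "S = {t. 0 \<le> t \<and> t \<le> 1 \<and> Vbar Lm t \<le> c}"
  have S0: "0 \<in> S" using V_le0[of 0 Lm] c0 by (simp add: S_def)
  have Sne: "S \<noteq> {}" using S0 by blast
  have Sbdd: "bdd_above S" by (auto simp: S_def bdd_above_def)
  have Sdown: "t \<in> S" if "u \<in> S" "0 \<le> t" "t \<le> u" for t u
    using V_mono[OF lm, of t u] that by (auto simp: S_def)
  define s where "s = Sup S"
  have s_ub: "t \<le> s" if "t \<in> S" for t using that by (simp add: s_def cSup_upper Sbdd)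
  have s1: "s \<le> 1" unfolding s_def using Sne by (intro cSup_least) (auto simp: S_def)
  have Ic: "?I t \<le> ennreal c" if "t \<in> S" for t
    using I_fin[OF lm, of t] that by (auto simp: S_def ennreal_leI)
  show ?thesis
  proof (cases "s \<in> S")
    case True
    have "(\<integral>\<^sup>+ y. indicator ?B y * ennreal ((norm y)\<^sup>2) \<partial>Lm) \<le> ?I s"
    proof (rule nn_integral_mono)
      fix y :: 'a
      show "indicator ?B y * ennreal ((norm y)\<^sup>2) \<le> indicator {y. norm y \<le> s} y * ennreal ((norm y)\<^sup>2)"
      proof (cases "y \<in> ?B")
        case True
        then have "norm y \<in> S" by (auto simp: S_def)
        then have "norm y \<le> s" by (rule s_ub)
        then show ?thesis using True by simp
      qed simp
    qed
    also have "\<dots> \<le> ennreal c" using Ic True by blast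
    finally show ?thesis .
  next
    case False
    define f where "f = (\<lambda>n y. indicator {y::'a. norm y \<le> s - 1 / real (Suc n)} y * ennreal ((norm y)\<^sup>2))"
    have inc: "incseq f"
    proof (intro monoI le_funI)
      fix m n :: nat and y :: 'a
      assume "m \<le> n"
      then have "1 / real (Suc n) \<le> 1 / real (Suc m)" by (simp add: frac_le)
      then show "f m y \<le> f n y" unfolding f_def by (auto simp: indicator_def)
    qed
    have meas: "f n \<in> borel_measurable Lm" for n unfolding f_def by (rule lm_meas[OF sets])
    have "(\<integral>\<^sup>+ y. indicator ?B y * ennreal ((norm y)\<^sup>2) \<partial>Lm) \<le> (\<integral>\<^sup>+ y. (SUP n. f n y) \<partial>Lm)"
    proof (rule nn_integral_mono)
      fix y :: 'a
      show "indicator ?B y * ennreal ((norm y)\<^sup>2) \<le> (SUP n. f n y)"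
      proof (cases "y \<in> ?B")
        case True
        then have "norm y \<in> S" by (auto simp: S_def)
        then have "norm y < s" using s_ub False by (metis order.not_eq_order_implies_strict)
        then obtain n where n: "inverse (real (Suc n)) < s - norm y"
          using reals_Archimedean[of "s - norm y"] by auto
        then have "norm y \<le> s - 1 / real (Suc n)" by (simp add: field_simps)
        then have "indicator ?B y * ennreal ((norm y)\<^sup>2) \<le> f n y" using True by (simp add: f_def)
        also have "\<dots> \<le> (SUP n. f n y)" by (rule SUP_upper) simp
        finally show ?thesis .
      qed simp
    qed
    also have "\<dots> = (SUP n. integral\<^sup>N Lm (f n))"
      by (rule nn_integral_monotone_convergence_SUP[OF inc meas])
    also have "\<dots> \<le> ennreal c"
    proof (rule SUP_least)
      fix n :: nat
      let ?t = "s - 1 / real (Suc n)"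
      have "1 / real (Suc n) \<ge> 0" by simp
      then have t1: "?t \<le> 1" using s1 by linarith
      have "Vbar Lm ?t \<le> c"
      proof (cases "?t \<le> 0")
        case True then show ?thesis using V_le0[OF True, of Lm] c0 by simp
      next
        case False
        have "?t < s" by simp
        then obtain u where "u \<in> S" "?t < u" using less_cSup_iff[OF Sne Sbdd] unfolding s_def by blast
        then have "?t \<in> S" using Sdown False by auto
        then show ?thesis by (simp add: S_def)
      qed
      then show "integral\<^sup>N Lm (f n) \<le> ennreal c"
        unfolding f_def using I_fin[OF lm t1] by (simp add: ennreal_leI)
    qed
    finally show ?thesis .
  qed
qed


theorem lemma4p1:
  fixes Lm :: "'a::euclidean_space measure" and g :: "real \<Rightarrow> real"
  assumes "levy_measure Lm"
    and "\<And>t. t > 0 \<Longrightarrow> Vbar Lm t > 0"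
    and "\<And>t. t \<ge> 0 \<Longrightarrow> g t > 0"
    and "mono_on {0..} g"
    and "\<And>c. c > 0 \<Longrightarrow> (\<integral>\<^sup>+ t. indicator {0..c} t * ennreal (1 / g t) \<partial>lborel) < \<infinity>"
  shows "(\<integral>\<^sup>+ y. indicator {y. norm y \<le> 1} y * ennreal ((norm y)\<^sup>2 / g (Vbar Lm (norm y))) \<partial>Lm) < \<infinity>"
proof -
  note lm = assms(1) and Vpos = assms(2) and gpos = assms(3) and gmono = assms(4)
  have sets: "sets Lm = sets borel" using lm unfolding levy_measure_def by simp
  define V1 where "V1 = Vbar Lm 1"
  have V1pos: "V1 > 0" unfolding V1_def by (rule Vpos) simp
  define c where "c = (\<lambda>k::nat. V1 / 2 ^ k)"
  have cpos: "c k > 0" for k using V1pos by (simp add: c_def)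
  have c_anti: "c n \<le> c m" if "m \<le> n" for m n
    unfolding c_def using V1pos that by (intro divide_left_mono power_increasing) auto
  have cSS: "c (Suc (Suc k)) = c k / 4" for k by (simp add: c_def)
  have cS: "c (Suc k) = c k / 2" for k by (simp add: c_def)
  define hk where "hk = (\<lambda>k. 1 / g (c (Suc k)))"
  have hk_pos: "hk k > 0" for k unfolding hk_def using gpos[of "c (Suc k)"] cpos[of "Suc k"] by simp
  define W where "W = (\<lambda>t. Vbar Lm (min 1 t))"
  have "mono W" unfolding W_def by (intro monoI V_mono[OF lm]) auto
  then have Wm[measurable]: "W \<in> borel_measurable borel" by (rule borel_measurable_mono)
  define G where "G = (\<lambda>t. g (max 0 t))"
  have "mono G" unfolding G_def using gmono by (intro monoI) (auto simp: mono_on_def)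
  then have Gm[measurable]: "G \<in> borel_measurable borel" by (rule borel_measurable_mono)
  define B where "B = (\<lambda>k. {y::'a. norm y \<le> 1 \<and> Vbar Lm (norm y) \<le> c k})"
  define F where "F = (\<lambda>k y. indicator (B k) y * ennreal ((norm y)\<^sup>2))"
  have FW: "F k = (\<lambda>y. indicator {y::'a. norm y \<le> 1 \<and> W (norm y) \<le> c k} y * ennreal ((norm y)\<^sup>2))" for k
    unfolding F_def B_def W_def by (intro ext) (auto simp: indicator_def min_def)
  have Fm: "F k \<in> borel_measurable Lm" for k
  proof -
    have "F k \<in> borel_measurable borel" unfolding FW by measurable
    then show ?thesis using measurable_cong_sets[OF sets refl, of borel] by metis
  qed
  have Fint: "integral\<^sup>N Lm (F k) \<le> ennreal (c k)" for k
    unfolding F_def B_def using key[OF lm, of "c k"] cpos[of k] by simp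
  define J where "J = (\<lambda>k. {c (Suc (Suc k))<..c (Suc k)})"
  define H where "H = (\<lambda>k t. indicator (J k) t * ennreal (1 / G t))"
  have Hm[measurable]: "H k \<in> borel_measurable lborel" for k unfolding H_def J_def by measurable

  have A: "indicator {y. norm y \<le> 1} y * ennreal ((norm y)\<^sup>2 / g (Vbar Lm (norm y)))
      \<le> (\<Sum>k. ennreal (hk k) * F k y)" for y :: 'a
  proof (cases "norm y \<le> 1 \<and> y \<noteq> 0")
    case False
    then show ?thesis by (auto simp: indicator_def)
  next
    case True
    define v where "v = Vbar Lm (norm y)"
    have vpos: "v > 0" unfolding v_def using True by (intro Vpos) simp
    have vle: "v \<le> V1" unfolding v_def V1_def using True by (intro V_mono[OF lm]) auto
    have "\<exists>n. c n < v"
    proof -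
      obtain n where "V1 / v < 2 ^ n" using real_arch_pow[of 2 "V1 / v"] by auto
      then have "c n < v" using vpos by (simp add: c_def field_simps)
      then show ?thesis ..
    qed
    define n where "n = (LEAST n. c n < v)"
    have n1: "c n < v" unfolding n_def by (rule LeastI_ex) fact
    have "n \<noteq> 0"
    proof
      assume "n = 0"
      then show False using n1 vle by (simp add: c_def)
    qed
    then obtain k where nk: "n = Suc k" by (cases n) auto
    have "\<not> c k < v" using nk unfolding n_def by (metis lessI not_less_Least)
    then have vk: "v \<le> c k" by simp
    have gle: "g (c (Suc k)) \<le> g v"
      using gmono n1 nk cpos[of "Suc k"] vpos by (auto simp: mono_on_def)
    have gp: "g (c (Suc k)) > 0" using gpos cpos[of "Suc k"] by simp
    have "(norm y)\<^sup>2 / g v \<le> (norm y)\<^sup>2 / g (c (Suc k))"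
      using gle gp by (intro divide_left_mono) auto
    then have "indicator {y. norm y \<le> 1} y * ennreal ((norm y)\<^sup>2 / g (Vbar Lm (norm y)))
        \<le> ennreal (hk k) * F k y"
    proof -
      have e: "ennreal (hk k) * ennreal ((norm y)\<^sup>2) = ennreal ((norm y)\<^sup>2 / g (c (Suc k)))"
        using gp by (simp add: hk_def ennreal_mult[symmetric])
      show ?thesis using True vk \<open>(norm y)\<^sup>2 / g v \<le> _\<close> unfolding F_def B_def v_def
        by (simp add: e ennreal_leI)
    qed
    also have "\<dots> \<le> (\<Sum>k. ennreal (hk k) * F k y)"
      using sum_le_suminf[OF summableI, of "{k}" "\<lambda>k. ennreal (hk k) * F k y"] by simp
    finally show ?thesis .
  qed
  have Tm: "(\<lambda>y. ennreal (hk k) * F k y) \<in> borel_measurable Lm" for k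
    using Fm by measurable
  have C: "ennreal (hk k) * ennreal (c k) \<le> 4 * integral\<^sup>N lborel (H k)" for k
  proof -
    have "ennreal (hk k) * ennreal (c k) = 4 * ennreal (hk k * (c (Suc k) - c (Suc (Suc k))))"
      using hk_pos[of k] cpos[of k] cSS[of k] cS[of k]
      by (simp add: ennreal_mult[symmetric] ennreal_numeral[symmetric] del: ennreal_numeral)
    also have "ennreal (hk k * (c (Suc k) - c (Suc (Suc k)))) = (\<integral>\<^sup>+ t. ennreal (hk k) * indicator (J k) t \<partial>lborel)"
      using hk_pos[of k] c_anti[of "Suc k" "Suc (Suc k)"]
      by (simp add: nn_integral_cmult_indicator J_def ennreal_mult)
    also have "\<dots> \<le> integral\<^sup>N lborel (H k)"
    proof (rule nn_integral_mono)
      fix t :: real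
      show "ennreal (hk k) * indicator (J k) t \<le> H k t"
      proof (cases "t \<in> J k")
        case True
        then have t: "0 < t" "t \<le> c (Suc k)" using cpos[of "Suc (Suc k)"] by (auto simp: J_def)
        then have "G t \<le> g (c (Suc k))" "G t > 0" using gmono gpos[of t]
          by (auto simp: G_def mono_on_def)
        then have "hk k \<le> 1 / G t" unfolding hk_def by (intro divide_left_mono) auto
        then show ?thesis using True by (simp add: H_def ennreal_leI)
      qed (simp add: H_def)
    qed
    finally show ?thesis by (simp add: mult_left_mono)
  qed
  have disj: "disjoint_family J"
    unfolding disjoint_family_on_def
  proof (intro ballI impI)
    fix m n :: nat assume "m \<noteq> n"
    then consider "m < n" | "n < m" by linarith
    then show "J m \<inter> J n = {}"
    proof cases
      case 1 then have "c (Suc n) \<le> c (Suc (Suc m))" by (intro c_anti) simp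
      then show ?thesis by (auto simp: J_def)
    next
      case 2 then have "c (Suc m) \<le> c (Suc (Suc n))" by (intro c_anti) simp
      then show ?thesis by (auto simp: J_def)
    qed
  qed
  have UJ: "(\<Union>k. J k) \<subseteq> {0..V1}"
  proof
    fix t assume "t \<in> (\<Union>k. J k)"
    then obtain k where "t \<in> J k" by blast
    then show "t \<in> {0..V1}" using cpos[of "Suc (Suc k)"] c_anti[of 0 "Suc k"]
      by (auto simp: J_def) (simp add: c_def)
  qed
  have "(\<integral>\<^sup>+ y. indicator {y. norm y \<le> 1} y * ennreal ((norm y)\<^sup>2 / g (Vbar Lm (norm y))) \<partial>Lm)
      \<le> (\<integral>\<^sup>+ y. (\<Sum>k. ennreal (hk k) * F k y) \<partial>Lm)"
    by (rule nn_integral_mono) (rule A)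
  also have "\<dots> = (\<Sum>k. \<integral>\<^sup>+ y. ennreal (hk k) * F k y \<partial>Lm)"
    by (rule nn_integral_suminf) (rule Tm)
  also have "\<dots> = (\<Sum>k. ennreal (hk k) * integral\<^sup>N Lm (F k))"
    using Fm by (simp add: nn_integral_cmult)
  also have "\<dots> \<le> (\<Sum>k. ennreal (hk k) * ennreal (c k))"
    by (intro suminf_le summableI mult_left_mono Fint) auto
  also have "\<dots> \<le> (\<Sum>k. 4 * integral\<^sup>N lborel (H k))"
    by (intro suminf_le summableI C)
  also have "\<dots> = 4 * (\<Sum>k. integral\<^sup>N lborel (H k))"
    by simp
  also have "(\<Sum>k. integral\<^sup>N lborel (H k)) = (\<integral>\<^sup>+ t. (\<Sum>k. H k t) \<partial>lborel)"
    by (rule nn_integral_suminf[symmetric]) (rule Hm)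
  also have "\<dots> = (\<integral>\<^sup>+ t. indicator (\<Union>k. J k) t * ennreal (1 / G t) \<partial>lborel)"
    unfolding H_def by (simp add: suminf_indicator[OF disj])
  finally have chain: "(\<integral>\<^sup>+ y. indicator {y. norm y \<le> 1} y * ennreal ((norm y)\<^sup>2 / g (Vbar Lm (norm y))) \<partial>Lm)
     \<le> 4 * (\<integral>\<^sup>+ t. indicator (\<Union>k. J k) t * ennreal (1 / G t) \<partial>lborel)" .
  have "(\<integral>\<^sup>+ t. indicator (\<Union>k. J k) t * ennreal (1 / G t) \<partial>lborel) \<le> (\<integral>\<^sup>+ t. indicator {0..V1} t * ennreal (1 / g t) \<partial>lborel)"
  proof (rule nn_integral_mono)
    fix t :: real
    show "indicator (\<Union>k. J k) t * ennreal (1 / G t) \<le> indicator {0..V1} t * ennreal (1 / g t)"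
    proof (cases "t \<in> (\<Union>k. J k)")
      case True
      then have "t \<in> {0..V1}" using UJ by blast
      then show ?thesis using True by (simp add: G_def)
    qed simp
  qed
  also have "\<dots> < \<infinity>" by (rule assms(5)[OF V1pos])
  finally have "4 * (\<integral>\<^sup>+ t. indicator (\<Union>k. J k) t * ennreal (1 / G t) \<partial>lborel) < \<infinity>"
    by (simp add: ennreal_mult_less_top)
  with chain show ?thesis by (rule le_less_trans)
qed

end
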